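(* Let $H:\mathbb{R}^{2m}\to\mathbb{R}$ be smooth and consider the canonical Hamiltonian system $\dot x^k=\partial H/\partial p^k$, $\dot p^k=-\partial H/\partial x^k$ ($k=1,\dots,m$). Let $\bar y=(\bar x,\bar p)\in\mathbb{R}^{2m}$ be such that $F'$ is invertible, where $$F'=\begin{pmatrix}H_{px}&H_{pp}\\ -H_{xx}&-H_{xp}\end{pmatrix}=SH_{yy}\quad\text{evaluated at }\bar y.$$ Consider the scheme $$y_{n+1}-y_n=\theta_n\,S\,\bar\nabla_sH(y_n,y_{n+1}),\qquad \theta_n=2(F')^{-1}\tanh\frac{h_nF'}{2}.$$ This scheme is locally exact at $\bar y$.
   Context: Notation: - $y=(x,p)\in\mathbb{R}^{2m}$, $y_n=(x_n,p_n)$, and $h_n$ is the time step. - $S=\begin{pmatrix}0&1\\-1&0\end{pmatrix}$ with $m\times m$ blocks. - $H_{xx},H_{xp},H_{px},H_{pp}$ are the $m\times m$ blocks of the Hessian $H_{yy}$. - $F=SH_y=(H_p,-H_x)^T$ at $\bar y$. $\bar\nabla_sH(y_n,y_{n+1})=\tfrac12\big(\bar\nabla H(y_n,y_{n+1})+\bar\nabla H(y_{n+1},y_n)\big)$ is the symmetrized coordinate increment discrete gradient, where $\bar\nabla H$ has components $$\frac{\Delta H}{\Delta y^j}=\frac{H(\hat y^j_n)-H(\hat y^{j-1}_n)}{y^j_{n+1}-y^j_n},\qquad \hat y^j_n=(y^1_{n+1},\dots,y^j_{n+1},y^{j+1}_n,\dots,y^{2m}_n),$$ with the partial derivative as limit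 when $y^j_{n+1}=y^j_n$. The exact discretization of the linearized system $\dot\nu=F'\nu+F$ (with $\nu=y-\bar y$) is $\nu_{n+1}=e^{h_nF'}\nu_n+(e^{h_nF'}-1)(F')^{-1}F$. The linearization of the scheme at $\bar y$ is obtained as follows: - substitute $y_n=\bar y+\nu_n$ and $y_{n+1}=\bar y+\nu_{n+1}$; - keep $\theta_n$ fixed at its value at $\bar y$; - keep terms to first order in $\nu$. The scheme is locally exact at $\bar y$ if the resulting linear relation coincides with the exact discretization, as a relation determining $\nu_{n+1}$ from $\nu_n$. *)

theory Defs
  imports "HOL-Analysis.Analysis"
begin

text \<open>Phase space R^(2m) is modelled as real^('m + 'm): the coordinate Inl k is x^k,
  the coordinate Inr k is p^k (k ranging over the finite, linearly ordered index type 'm).\<close>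

definition partial :: "(real^'n \<Rightarrow> real) \<Rightarrow> 'n::finite \<Rightarrow> real^'n \<Rightarrow> real" where
  "partial H c y = frechet_derivative H (at y) (axis c 1)"

fun iter_partial :: "'n::finite list \<Rightarrow> (real^'n \<Rightarrow> real) \<Rightarrow> real^'n \<Rightarrow> real" where
  "iter_partial [] H = H"
| "iter_partial (c # cs) H = partial (iter_partial cs H) c"

definition smooth :: "(real^'n::finite \<Rightarrow> real) \<Rightarrow> bool" where
  "smooth H \<longleftrightarrow> (\<forall>cs y. iter_partial cs H differentiable (at y))"

definition grad :: "(real^'n::finite \<Rightarrow> real) \<Rightarrow> real^'n \<Rightarrow> real^'n" where
  "grad H y = (\<chi> c. partial H c y)"

definition hessian :: "(real^'n::finite \<Rightarrow> real) \<Rightarrow> real^'n \<Rightarrow> real^'n^'n" where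
  "hessian H y = jacobian (grad H) (at y)"

definition Smat :: "real^('m::finite + 'm)^('m + 'm)" where
  "Smat = (\<chi> i j. case (i, j) of
              (Inl a, Inr b) \<Rightarrow> (if a = b then 1 else 0)
            | (Inr a, Inl b) \<Rightarrow> (if a = b then -1 else 0)
            | _ \<Rightarrow> 0)"

text \<open>Ordering of the 2m coordinates: y^1..y^2m = x^1..x^m, p^1..p^m.\<close>
definition coords :: "('m::{finite,linorder} + 'm) list" where
  "coords = map Inl (sorted_list_of_set UNIV) @ map Inr (sorted_list_of_set UNIV)"

text \<open>hat y^j: first j coordinates from b (= y_(n+1)), the rest from a (= y_n).\<close>
definition yhat :: "nat \<Rightarrow> real^('m::{finite,linorder} + 'm) \<Rightarrow> real^('m + 'm) \<Rightarrow> real^('m + 'm)" where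
  "yhat j a b = (\<chi> c. if c \<in> set (take j coords) then b $ c else a $ c)"

text \<open>Coordinate increment discrete gradient; the component belonging to the j-th
  coordinate (j = k+1) is the divided difference, or the partial derivative in the limit case.\<close>
definition dgrad :: "(real^('m::{finite,linorder} + 'm) \<Rightarrow> real)
     \<Rightarrow> real^('m + 'm) \<Rightarrow> real^('m + 'm) \<Rightarrow> real^('m + 'm)" where
  "dgrad H a b = (\<Sum>k<length (coords::('m + 'm) list).
     (let c = coords ! k in
       (if b $ c \<noteq> a $ c
        then (H (yhat (Suc k) a b) - H (yhat k a b)) / (b $ c - a $ c)
        else partial H c (yhat k a b))) *\<^sub>R axis (coords ! k) 1)"

definition dgrad_s :: "(real^('m::{finite,linorder} + 'm) \<Rightarrow> real)
     \<Rightarrow> real^('m + 'm) \<Rightarrow> real^('m + 'm) \<Rightarrow> real^('m + 'm)" where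
  "dgrad_s H a b = (1/2) *\<^sub>R (dgrad H a b + dgrad H b a)"

fun matpow :: "real^'n^'n \<Rightarrow> nat \<Rightarrow> real^'n^'n" where
  "matpow A 0 = mat 1"
| "matpow A (Suc k) = A ** matpow A k"

definition mexp :: "real^'n^'n \<Rightarrow> real^'n^'n" where
  "mexp A = (\<Sum>k. (1 / fact k) *\<^sub>R matpow A k)"

definition msinh :: "real^'n^'n \<Rightarrow> real^'n^'n" where
  "msinh A = (1/2) *\<^sub>R (mexp A - mexp (- A))"

definition mcosh :: "real^'n^'n \<Rightarrow> real^'n^'n" where
  "mcosh A = (1/2) *\<^sub>R (mexp A + mexp (- A))"

definition mtanh :: "real^'n^'n \<Rightarrow> real^'n^'n" where
  "mtanh A = msinh A ** matrix_inv (mcosh A)"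

end

theory Submission
  imports Defs
begin


lemma matpow_comm:
  fixes A B :: "real^'n::finite^'n"
  assumes "A ** B = B ** A"
  shows "matpow A k ** B = B ** matpow A k"
proof (induction k)
  case 0 then show ?case by simp
next
  case (Suc k)
  have "matpow A (Suc k) ** B = A ** (matpow A k ** B)" by (simp add: matrix_mul_assoc)
  also have "\<dots> = (A ** B) ** matpow A k" using Suc by (simp add: matrix_mul_assoc)
  also have "\<dots> = B ** matpow A (Suc k)" using assms by (simp add: matrix_mul_assoc)
  finally show ?case .
qed

definition mnorm :: "real^'n::finite^'n \<Rightarrow> real" where
  "mnorm A = (\<Sum>i\<in>UNIV. \<Sum>j\<in>UNIV. \<bar>A$i$j\<bar>)"

lemma mnorm_nonneg: "0 \<le> mnorm A"
  unfolding mnorm_def by (intro sum_nonneg) auto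

lemma row_le_mnorm: "(\<Sum>j\<in>UNIV. \<bar>A$i$j\<bar>) \<le> mnorm A"
  unfolding mnorm_def by (rule member_le_sum) (auto intro: sum_nonneg)

lemma matpow_entry_bound:
  fixes A :: "real^'n::finite^'n"
  shows "\<bar>matpow A k $ i $ j\<bar> \<le> mnorm A ^ k"
proof (induction k arbitrary: i j)
  case 0 then show ?case by (simp add: mat_def)
next
  case (Suc k)
  have "\<bar>matpow A (Suc k) $ i $ j\<bar> = \<bar>\<Sum>l\<in>UNIV. A$i$l * matpow A k $ l $ j\<bar>"
    by (simp add: matrix_matrix_mult_def)
  also have "\<dots> \<le> (\<Sum>l\<in>UNIV. \<bar>A$i$l\<bar> * mnorm A ^ k)"
    by (rule order_trans[OF sum_abs]) (auto intro!: sum_mono mult_left_mono simp: abs_mult Suc)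
  also have "\<dots> = (\<Sum>l\<in>UNIV. \<bar>A$i$l\<bar>) * mnorm A ^ k" by (simp add: sum_distrib_right)
  also have "\<dots> \<le> mnorm A * mnorm A ^ k"
    by (rule mult_right_mono[OF row_le_mnorm]) (simp add: mnorm_nonneg)
  finally show ?case by simp
qed

lemma norm_le_entries:
  fixes X :: "real^'n::finite^'n"
  shows "norm X \<le> (\<Sum>i\<in>UNIV. \<Sum>j\<in>UNIV. \<bar>X$i$j\<bar>)"
proof -
  have "norm X \<le> (\<Sum>i\<in>UNIV. \<bar>norm (X$i)\<bar>)"
    by (simp add: norm_vec_def L2_set_le_sum)
  also have "\<dots> \<le> (\<Sum>i\<in>UNIV. \<Sum>j\<in>UNIV. \<bar>X$i$j\<bar>)"
    by (intro sum_mono) (simp add: norm_le_l1_cart)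
  finally show ?thesis .
qed

definition eterm :: "real^'n::finite^'n \<Rightarrow> nat \<Rightarrow> real^'n^'n" where
  "eterm A k = (1 / fact k) *\<^sub>R matpow A k"

lemma eterm_entry_bound: "\<bar>eterm A k $ i $ j\<bar> \<le> inverse (fact k) * mnorm A ^ k"
  unfolding eterm_def using matpow_entry_bound[of A k i j]
  by (simp add: abs_mult divide_inverse mult_left_mono)

lemma summable_eterm_entry: "summable (\<lambda>k. \<bar>eterm A k $ i $ j\<bar>)"
  by (rule summable_comparison_test[OF _ summable_exp[of "mnorm A"]])
     (auto intro: eterm_entry_bound)

lemma summable_norm_eterm:
  fixes A :: "real^'n::finite^'n"
  shows "summable (\<lambda>k. norm (eterm A k))"
proof (rule summable_comparison_test)
  show "summable (\<lambda>k. real (CARD('n)) * real (CARD('n)) * (inverse (fact k) * mnorm A ^ k))"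
    by (intro summable_mult summable_exp)
  show "\<exists>N. \<forall>n\<ge>N. norm (norm (eterm A n)) \<le> real CARD('n) * real CARD('n) * (inverse (fact n) * mnorm A ^ n)"
  proof (intro exI allI impI)
    fix k :: nat
    have "norm (eterm A k) \<le> (\<Sum>i\<in>UNIV. \<Sum>j\<in>UNIV. \<bar>eterm A k $i$j\<bar>)" by (rule norm_le_entries)
    also have "\<dots> \<le> (\<Sum>i\<in>(UNIV::'n set). \<Sum>j\<in>(UNIV::'n set). inverse (fact k) * mnorm A ^ k)"
      by (intro sum_mono) (rule eterm_entry_bound)
    also have "\<dots> = real (CARD('n)) * real (CARD('n)) * (inverse (fact k) * mnorm A ^ k)" by simp
    finally show "norm (norm (eterm A k)) \<le> real CARD('n) * real CARD('n) * (inverse (fact k) * mnorm A ^ k)" by simp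
  qed
qed

lemma mexp_sums: "eterm A sums mexp A"
proof -
  have "summable (eterm A)" by (rule summable_norm_cancel[OF summable_norm_eterm])
  then show ?thesis unfolding mexp_def eterm_def[abs_def] by (simp add: summable_sums)
qed

lemma mexp_entry: "mexp A $ i $ j = (\<Sum>k. eterm A k $ i $ j)"
  using sums_vec_nth[OF sums_vec_nth[OF mexp_sums[of A]], of i j] by (simp add: sums_iff)

lemma mm_add_rdistrib:
  fixes A B C :: "real^'n::finite^'n"
  shows "(A + B) ** C = A ** C + B ** C"
  by (vector matrix_matrix_mult_def sum.distrib[symmetric] field_simps)

lemma mm_sum_right: "(A::real^'n::finite^'n) ** sum f S = (\<Sum>i\<in>S. A ** f i)"
  by (induct S rule: infinite_finite_induct) (auto simp: matrix_add_ldistrib)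

lemma mm_sum_left:
  fixes f :: "'b \<Rightarrow> real^'n::finite^'n" and A :: "real^'n^'n"
  shows "sum f S ** A = (\<Sum>i\<in>S. f i ** A)"
  by (induct S rule: infinite_finite_induct) (auto simp: mm_add_rdistrib)

lemma eterm_comm:
  fixes x y :: "real^'n::finite^'n"
  assumes "x ** y = y ** x"
  shows "eterm x n ** y = y ** eterm x n"
  unfolding eterm_def by (simp add: matrix_scalar_ac scalar_matrix_assoc[symmetric] matpow_comm[OF assms])

lemma eterm_add_commuting:
  fixes x y :: "real^'n::finite^'n"
  defines S_def: "S \<equiv> eterm"
  assumes comm: "x ** y = y ** x"
  shows "S (x + y) n = (\<Sum>i\<le>n. S x i ** S y (n - i))"
proof (induct n)
  case 0
  show ?case
    unfolding S_def eterm_def by simp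
next
  case (Suc n)
  have S_Suc: "\<And>x n. S x (Suc n) = (x ** S x n) /\<^sub>R real (Suc n)"
    unfolding S_def eterm_def by (simp add: matrix_scalar_ac scalar_matrix_assoc[symmetric] field_simps del: mult_Suc)
  then have times_S: "\<And>x n. x ** S x n = real (Suc n) *\<^sub>R S x (Suc n)"
    by simp
  have S_comm: "\<And>n. S x n ** y = y ** S x n"
    unfolding S_def by (rule eterm_comm[OF comm])

  have "real (Suc n) *\<^sub>R S (x + y) (Suc n) = (x + y) ** (\<Sum>i\<le>n. S x i ** S y (n - i))"
    by (metis Suc.hyps times_S)
  also have "\<dots> = x ** (\<Sum>i\<le>n. S x i ** S y (n - i)) + y ** (\<Sum>i\<le>n. S x i ** S y (n - i))"
    by (rule mm_add_rdistrib)
  also have "\<dots> = (\<Sum>i\<le>n. x ** S x i ** S y (n - i)) + (\<Sum>i\<le>n. S x i ** y ** S y (n - i))"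
    by (simp add: mm_sum_right matrix_mul_assoc S_comm)
  also have "\<dots> = (\<Sum>i\<le>n. x ** S x i ** S y (n - i)) + (\<Sum>i\<le>n. S x i ** (y ** S y (n - i)))"
    by (simp add: matrix_mul_assoc)
  also have "\<dots> = (\<Sum>i\<le>n. real (Suc i) *\<^sub>R (S x (Suc i) ** S y (n - i)))
                + (\<Sum>i\<le>n. real (Suc n - i) *\<^sub>R (S x i ** S y (Suc n - i)))"
    by (simp add: times_S Suc_diff_le matrix_scalar_ac scalar_matrix_assoc)
  also have "(\<Sum>i\<le>n. real (Suc i) *\<^sub>R (S x (Suc i) ** S y (n - i)))
           = (\<Sum>i\<le>Suc n. real i *\<^sub>R (S x i ** S y (Suc n - i)))"
    by (subst sum.atMost_Suc_shift) simp
  also have "(\<Sum>i\<le>n. real (Suc n - i) *\<^sub>R (S x i ** S y (Suc n - i)))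
           = (\<Sum>i\<le>Suc n. real (Suc n - i) *\<^sub>R (S x i ** S y (Suc n - i)))"
    by simp
  also have "(\<Sum>i\<le>Suc n. real i *\<^sub>R (S x i ** S y (Suc n - i)))
           + (\<Sum>i\<le>Suc n. real (Suc n - i) *\<^sub>R (S x i ** S y (Suc n - i)))
           = (\<Sum>i\<le>Suc n. real (Suc n) *\<^sub>R (S x i ** S y (Suc n - i)))"
    by (simp flip: sum.distrib scaleR_add_left of_nat_add)
  also have "\<dots> = real (Suc n) *\<^sub>R (\<Sum>i\<le>Suc n. S x i ** S y (Suc n - i))"
    by (simp only: scaleR_right.sum)
  finally show
    "S (x + y) (Suc n) = (\<Sum>i\<le>Suc n. S x i ** S y (Suc n - i))"
    by (simp del: sum.cl_ivl_Suc)
qed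

lemma mm_entry: "((A::real^'n::finite^'n) ** B) $ i $ j = (\<Sum>l\<in>UNIV. A$i$l * B$l$j)"
  by (simp add: matrix_matrix_mult_def)

lemma mexp_add:
  fixes x y :: "real^'n::finite^'n"
  assumes comm: "x ** y = y ** x"
  shows "mexp (x + y) = mexp x ** mexp y"
proof -
  have "(mexp x ** mexp y) $ i $ j = mexp (x + y) $ i $ j" for i j
  proof -
    let ?c = "\<lambda>l n. \<Sum>k\<le>n. eterm x k $ i $ l * eterm y (n - k) $ l $ j"
    have "(mexp x ** mexp y) $ i $ j = (\<Sum>l\<in>UNIV. (\<Sum>k. eterm x k $ i $ l) * (\<Sum>k. eterm y k $ l $ j))"
      by (simp add: mm_entry mexp_entry)
    also have "\<dots> = (\<Sum>l\<in>UNIV. \<Sum>n. ?c l n)"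
      by (intro sum.cong refl Cauchy_product) (simp_all add: summable_eterm_entry)
    also have "\<dots> = (\<Sum>n. \<Sum>l\<in>UNIV. ?c l n)"
      by (rule suminf_sum[symmetric]) (intro ballI summable_Cauchy_product, simp_all add: summable_eterm_entry)
    also have "\<dots> = (\<Sum>n. eterm (x + y) n $ i $ j)"
    proof (rule suminf_cong)
      fix n
      have "(\<Sum>l\<in>UNIV. ?c l n) = (\<Sum>k\<le>n. (eterm x k ** eterm y (n - k)) $ i $ j)"
        by (simp add: mm_entry sum.swap[of _ UNIV])
      also have "\<dots> = eterm (x + y) n $ i $ j"
        by (simp add: eterm_add_commuting[OF comm])
      finally show "(\<Sum>l\<in>UNIV. ?c l n) = eterm (x + y) n $ i $ j" .
    qed
    also have "\<dots> = mexp (x + y) $ i $ j" by (simp add: mexp_entry)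
    finally show ?thesis .
  qed
  then show ?thesis by (simp add: vec_eq_iff)
qed

lemma mexp_zero: "mexp (0::real^'n::finite^'n) = mat 1"
proof -
  have "eterm (0::real^'n^'n) sums mat 1"
  proof -
    have "eterm (0::real^'n^'n) = (\<lambda>k. if k = 0 then mat 1 else 0)"
    proof
      fix k show "eterm (0::real^'n^'n) k = (if k = 0 then mat 1 else 0)"
        by (cases k) (simp_all add: eterm_def)
    qed
    then show ?thesis by (simp add: sums_single[of 0 "\<lambda>_. mat 1", simplified] )
  qed
  then show ?thesis using mexp_sums sums_unique2 by blast
qed

lemma mexp_comm:
  fixes x y :: "real^'n::finite^'n"
  assumes comm: "x ** y = y ** x"
  shows "mexp x ** y = y ** mexp x"
proof -
  have l: "bounded_linear (\<lambda>M::real^'n^'n. M ** y)"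
    by (rule linear_conv_bounded_linear[THEN iffD1], rule linearI) (simp_all add: mm_add_rdistrib scalar_matrix_assoc)
  have r: "bounded_linear (\<lambda>M::real^'n^'n. y ** M)"
    by (rule linear_conv_bounded_linear[THEN iffD1], rule linearI) (simp_all add: matrix_add_ldistrib matrix_scalar_ac scalar_matrix_assoc[symmetric])
  have "(\<lambda>k. eterm x k ** y) sums (mexp x ** y)"
    using bounded_linear.sums[OF l mexp_sums] .
  moreover have "(\<lambda>k. y ** eterm x k) sums (y ** mexp x)"
    using bounded_linear.sums[OF r mexp_sums] .
  ultimately show ?thesis using eterm_comm[OF comm] sums_unique2 by simp
qed



lemma inv_lr:
  fixes M :: "real^'n::finite^'n"
  assumes "invertible M"
  shows "M ** matrix_inv M = mat 1" "matrix_inv M ** M = mat 1"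
proof -
  have "\<exists>A'. M ** A' = mat 1 \<and> A' ** M = mat 1" using assms by (simp add: invertible_def)
  then have "M ** matrix_inv M = mat 1 \<and> matrix_inv M ** M = mat 1"
    unfolding matrix_inv_def by (rule someI_ex)
  then show "M ** matrix_inv M = mat 1" "matrix_inv M ** M = mat 1" by auto
qed

lemma inv_comm:
  fixes M X :: "real^'n::finite^'n"
  assumes "invertible M" "M ** X = X ** M"
  shows "matrix_inv M ** X = X ** matrix_inv M"
proof -
  have "matrix_inv M ** X = matrix_inv M ** X ** (M ** matrix_inv M)" by (simp add: inv_lr[OF assms(1)])
  also have "\<dots> = matrix_inv M ** (M ** X) ** matrix_inv M" by (simp add: matrix_mul_assoc assms(2))
  also have "\<dots> = X ** matrix_inv M" by (simp add: matrix_mul_assoc inv_lr[OF assms(1)])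
  finally show ?thesis .
qed

lemma inv_cancel_v:
  fixes M :: "real^'n::finite^'n"
  assumes "invertible M"
  shows "(M *v x = M *v y) \<longleftrightarrow> x = y"
  by (metis assms inv_lr(2) matrix_vector_mul_assoc matrix_vector_mul_lid)

lemma mexp_scale_comm:
  fixes F X :: "real^'n::finite^'n"
  assumes "F ** X = X ** F"
  shows "mexp (c *\<^sub>R F) ** X = X ** mexp (c *\<^sub>R F)"
  by (rule mexp_comm) (simp add: matrix_scalar_ac scalar_matrix_assoc[symmetric] assms)

lemma vec_lemma:
  fixes a b c d K :: "'v::real_vector"
  shows "((1/2) *\<^sub>R (a + b) - (1/2) *\<^sub>R (c + d) = K + (1/2) *\<^sub>R (c - d) + (1/2) *\<^sub>R (a - b))
     \<longleftrightarrow> b = c + K"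
proof -
  have "(1/2) *\<^sub>R (a + b) - (1/2) *\<^sub>R (c + d) - (K + (1/2) *\<^sub>R (c - d) + (1/2) *\<^sub>R (a - b)) = b - (c + K)"
    by (simp add: algebra_simps scaleR_2[symmetric] flip: scaleR_add_left)
  then show ?thesis by (metis eq_iff_diff_eq_0)
qed

lemma mm_diff_l: "(A::real^'n::finite^'n) ** (B - C) = A ** B - A ** C"
  by (vector matrix_matrix_mult_def sum_subtractf[symmetric] field_simps)
lemma mm_diff_r: "((A::real^'n::finite^'n) - B) ** C = A ** C - B ** C"
  by (vector matrix_matrix_mult_def sum_subtractf[symmetric] field_simps)

lemma scaleR_mv: "((c::real) *\<^sub>R (M::real^'n::finite^'m)) *v x = c *\<^sub>R (M *v x)"
  by (simp add: vec_eq_iff matrix_vector_mult_def sum_distrib_left mult.assoc)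

lemma main_algebra:
  fixes Sm J :: "real^'n::finite^'n" and g \<nu>0 \<nu>1 :: "real^'n" and h :: real
  defines "F' \<equiv> Sm ** J"
  defines "F \<equiv> Sm *v g"
  defines "\<theta> \<equiv> 2 *\<^sub>R (matrix_inv F' ** mtanh ((h / 2) *\<^sub>R F'))"
  assumes inv: "invertible F'"
    and cosh_inv: "invertible (mcosh ((h / 2) *\<^sub>R F'))"
  shows "(\<nu>1 - \<nu>0 = \<theta> *v (Sm *v (g + (1/2) *\<^sub>R (J *v (\<nu>0 + \<nu>1)))))
     \<longleftrightarrow> \<nu>1 = mexp (h *\<^sub>R F') *v \<nu>0 + ((mexp (h *\<^sub>R F') - mat 1) ** matrix_inv F') *v F"
proof -
  define A where "A = (h / 2) *\<^sub>R F'"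
  define P where "P = mexp A"
  define Q where "Q = mexp (-A)"
  define C where "C = mcosh A"
  define Sh where "Sh = msinh A"
  define Fi where "Fi = matrix_inv F'"
  define Ci where "Ci = matrix_inv C"
  define E where "E = mexp (h *\<^sub>R F')"
  define T where "T = Sh ** Ci"
  have Cinv: "invertible C" using cosh_inv by (simp add: C_def A_def)
  have C_eq: "C = (1/2) *\<^sub>R (P + Q)" by (simp add: C_def P_def Q_def mcosh_def)
  have Sh_eq: "Sh = (1/2) *\<^sub>R (P - Q)" by (simp add: Sh_def P_def Q_def msinh_def)
  have th: "\<theta> = 2 *\<^sub>R (Fi ** T)"
    by (simp add: \<theta>_def Fi_def T_def mtanh_def Sh_def Ci_def C_def A_def)
  have FFi: "F' ** Fi = mat 1" "Fi ** F' = mat 1" using inv_lr[OF inv] by (simp_all add: Fi_def)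
  have negA: "- A = (- (h/2)) *\<^sub>R F'" by (simp add: A_def)
  have AA: "A + A = h *\<^sub>R F'" by (simp add: A_def flip: scaleR_add_left)
  have Q_eq: "Q = mexp ((- (h/2)) *\<^sub>R F')" by (simp add: Q_def A_def)
  have cF: "\<And>X. F' ** X = X ** F' \<Longrightarrow> P ** X = X ** P \<and> Q ** X = X ** Q"
  proof -
    fix X assume a: "F' ** X = X ** F'"
    show "P ** X = X ** P \<and> Q ** X = X ** Q"
      using mexp_scale_comm[OF a, of "h/2"] mexp_scale_comm[OF a, of "-(h/2)"]
      by (simp add: P_def Q_def A_def)
  qed
  have PF: "P ** F' = F' ** P" "Q ** F' = F' ** Q" using cF[of F'] by auto
  have PFi: "P ** Fi = Fi ** P" "Q ** Fi = Fi ** Q"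
    using cF[of Fi] FFi by auto
  have PQ0: "P ** Q = Q ** P"
    using cF[of Q] PF by (simp add: Q_eq mexp_scale_comm)
  have PQ: "P ** Q = mat 1" "Q ** P = mat 1"
  proof -
    have "A ** ((-1::real) *\<^sub>R A) = ((-1::real) *\<^sub>R A) ** A" by (simp only: matrix_scalar_ac)
    then have c: "A ** (-A) = (-A) ** A" by simp
    have c2: "(-A) ** A = A ** (-A)" using c by simp
    show "P ** Q = mat 1" using mexp_add[OF c] by (simp add: P_def Q_def mexp_zero)
    show "Q ** P = mat 1" using mexp_add[OF c2] by (simp add: P_def Q_def mexp_zero)
  qed
  have PP: "P ** P = E"
  proof -
    have c: "A ** A = A ** A" by simp
    show ?thesis using mexp_add[OF c] by (simp add: P_def E_def AA)
  qed
  note dist = matrix_scalar_ac scalar_matrix_assoc[symmetric] mm_add_rdistrib matrix_add_ldistrib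
     mm_diff_l mm_diff_r scaleR_add_right scaleR_diff_right
  have CF: "C ** F' = F' ** C" by (simp add: C_eq dist PF)
  have ShF: "Sh ** F' = F' ** Sh" by (simp add: Sh_eq dist PF)
  have CFi: "C ** Fi = Fi ** C" by (simp add: C_eq dist PFi)
  have ShFi: "Sh ** Fi = Fi ** Sh" by (simp add: Sh_eq dist PFi)
  have CSh: "C ** Sh = Sh ** C" by (simp add: C_eq Sh_eq dist PQ0 algebra_simps)
  have CiF: "Ci ** F' = F' ** Ci" unfolding Ci_def by (rule inv_comm[OF Cinv CF])
  have CiSh: "Ci ** Sh = Sh ** Ci" unfolding Ci_def by (rule inv_comm[OF Cinv CSh])
  have CCi: "C ** Ci = mat 1" unfolding Ci_def by (rule inv_lr[OF Cinv])
  have CT: "C ** T = Sh"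
  proof -
    have "C ** T = (C ** Sh) ** Ci" by (simp add: T_def matrix_mul_assoc)
    also have "\<dots> = Sh ** (C ** Ci)" by (simp add: CSh matrix_mul_assoc)
    finally show ?thesis by (simp add: CCi)
  qed
  have TF: "T ** F' = F' ** T"
  proof -
    have "T ** F' = Sh ** (Ci ** F')" by (simp add: T_def matrix_mul_assoc)
    also have "\<dots> = (Sh ** F') ** Ci" by (simp add: CiF matrix_mul_assoc)
    also have "\<dots> = F' ** T" by (simp add: ShF T_def matrix_mul_assoc)
    finally show ?thesis .
  qed
  have thF: "\<theta> ** F' = 2 *\<^sub>R T"
  proof -
    have "\<theta> ** F' = 2 *\<^sub>R (Fi ** (T ** F'))" by (simp add: th matrix_mul_assoc scalar_matrix_assoc)
    also have "\<dots> = 2 *\<^sub>R ((Fi ** F') ** T)" by (simp add: TF matrix_mul_assoc)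
    finally show ?thesis by (simp add: FFi)
  qed
  have Cth: "C ** \<theta> = 2 *\<^sub>R (Fi ** Sh)"
  proof -
    have "C ** \<theta> = 2 *\<^sub>R ((C ** Fi) ** T)" by (simp add: th matrix_mul_assoc matrix_scalar_ac scalar_matrix_assoc)
    also have "\<dots> = 2 *\<^sub>R (Fi ** (C ** T))" by (simp add: CFi matrix_mul_assoc)
    finally show ?thesis by (simp add: CT)
  qed
  have PSh: "P ** Sh = (1/2) *\<^sub>R (E - mat 1)"
    by (simp add: Sh_eq dist PP PQ)
  have EFi: "E ** Fi = Fi ** E"
    unfolding PP[symmetric] by (metis PFi(1) matrix_mul_assoc)
  have key: "P ** (C ** \<theta>) = (E - mat 1) ** Fi"
  proof -
    have "P ** (C ** \<theta>) = 2 *\<^sub>R ((P ** Fi) ** Sh)" by (simp add: Cth matrix_scalar_ac scalar_matrix_assoc[symmetric] matrix_mul_assoc)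
    also have "\<dots> = 2 *\<^sub>R (Fi ** (P ** Sh))" by (simp add: PFi matrix_mul_assoc)
    also have "\<dots> = Fi ** (E - mat 1)" by (simp add: PSh matrix_scalar_ac scalar_matrix_assoc[symmetric])
    also have "\<dots> = (E - mat 1) ** Fi" by (simp add: mm_diff_l mm_diff_r EFi)
    finally show ?thesis .
  qed
  have Pinv: "invertible P" using PQ unfolding invertible_def by blast
  let ?K = "(C ** \<theta>) *v F"
  have s1: "\<theta> *v (Sm *v (g + (1/2) *\<^sub>R (J *v (\<nu>0 + \<nu>1)))) = \<theta> *v F + T *v (\<nu>0 + \<nu>1)"
    by (simp add: F_def F'_def matrix_vector_right_distrib matrix_vector_mult_scaleR
        matrix_vector_mul_assoc thF[unfolded F'_def] scaleR_mv scaleR_add_right)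
  have "(\<nu>1 - \<nu>0 = \<theta> *v (Sm *v (g + (1/2) *\<^sub>R (J *v (\<nu>0 + \<nu>1)))))
      \<longleftrightarrow> C *v (\<nu>1 - \<nu>0) = C *v (\<theta> *v F + T *v (\<nu>0 + \<nu>1))"
    by (simp add: s1 inv_cancel_v[OF Cinv])
  also have "\<dots> \<longleftrightarrow> (1/2) *\<^sub>R (P *v \<nu>1 + Q *v \<nu>1) - (1/2) *\<^sub>R (P *v \<nu>0 + Q *v \<nu>0)
       = ?K + (1/2) *\<^sub>R (P *v \<nu>0 - Q *v \<nu>0) + (1/2) *\<^sub>R (P *v \<nu>1 - Q *v \<nu>1)"
  proof -
    have l: "C *v (\<nu>1 - \<nu>0) = (1/2) *\<^sub>R (P *v \<nu>1 + Q *v \<nu>1) - (1/2) *\<^sub>R (P *v \<nu>0 + Q *v \<nu>0)"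
      by (simp add: C_eq algebra_simps scaleR_mv)
    have r: "C *v (\<theta> *v F + T *v (\<nu>0 + \<nu>1)) = ?K + (1/2) *\<^sub>R (P *v \<nu>0 - Q *v \<nu>0) + (1/2) *\<^sub>R (P *v \<nu>1 - Q *v \<nu>1)"
      by (simp add: matrix_vector_mul_assoc matrix_vector_right_distrib CT Sh_eq algebra_simps scaleR_mv)
    show ?thesis by (simp only: l r)
  qed
  also have "\<dots> \<longleftrightarrow> Q *v \<nu>1 = P *v \<nu>0 + ?K" by (rule vec_lemma)
  also have "\<dots> \<longleftrightarrow> P *v (Q *v \<nu>1) = P *v (P *v \<nu>0 + ?K)" by (simp add: inv_cancel_v[OF Pinv])
  also have "\<dots> \<longleftrightarrow> \<nu>1 = E *v \<nu>0 + ((E - mat 1) ** Fi) *v F"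
    by (simp add: matrix_vector_mul_assoc matrix_vector_right_distrib PQ PP key[symmetric])
  finally show ?thesis by (simp add: E_def Fi_def)
qed



lemma coords_distinct: "distinct (coords :: ('m::{finite,linorder} + 'm) list)"
  unfolding coords_def by (auto simp: distinct_map inj_on_def)

lemma coords_set: "set (coords :: ('m::{finite,linorder} + 'm) list) = UNIV"
proof -
  have "x \<in> set (coords :: ('m + 'm) list)" for x
    by (cases x) (auto simp: coords_def)
  then show ?thesis by auto
qed

lemma sum_coords:
  fixes f :: "('m::{finite,linorder} + 'm) \<Rightarrow> 'a::comm_monoid_add"
  shows "(\<Sum>k<length (coords :: ('m + 'm) list). f (coords ! k)) = (\<Sum>c\<in>UNIV. f c)"
proof -
  have "(\<Sum>k<length (coords :: ('m + 'm) list). f (coords ! k)) = sum_list (map f (coords :: ('m + 'm) list))"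
    by (simp add: sum_list_sum_nth atLeast0LessThan)
  also have "\<dots> = sum f (set (coords :: ('m + 'm) list))"
    by (rule sum_list_distinct_conv_sum_set[OF coords_distinct])
  finally show ?thesis by (simp add: coords_set)
qed

lemma coords_not_in_take:
  assumes "k < length (coords :: ('m::{finite,linorder} + 'm) list)"
  shows "(coords ! k :: ('m + 'm)) \<notin> set (take k coords)"
  using assms coords_distinct
  by (metis distinct_take in_set_conv_nth length_take less_not_refl min_less_iff_conj nth_eq_iff_index_eq nth_take take_Suc_conv_app_nth distinct_append distinct.simps(2) set_append)

lemma yhat_Suc:
  fixes a b :: "real^('m::{finite,linorder} + 'm)"
  assumes "k < length (coords :: ('m + 'm) list)"
  shows "yhat (Suc k) a b = yhat k a b + (b $ (coords!k) - a $ (coords!k)) *\<^sub>R axis (coords ! k) 1"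
  using coords_not_in_take[OF assms]
  by (auto simp: yhat_def vec_eq_iff take_Suc_conv_app_nth[OF assms] axis_def)

lemma yhat_at:
  fixes a b :: "real^('m::{finite,linorder} + 'm)"
  assumes "k < length (coords :: ('m + 'm) list)"
  shows "yhat k a b $ (coords!k) = a $ (coords!k)"
  using coords_not_in_take[OF assms] by (simp add: yhat_def)

lemma yhat_same: "yhat k a a = a"
  by (simp add: yhat_def vec_eq_iff)

lemma yhat_swap_add: "yhat k a b + yhat k b a = a + b"
  by (simp add: yhat_def vec_eq_iff)

lemma yhat_diff: "yhat k a b - yhat k a' b' = yhat k (a - a') (b - b')"
  by (simp add: yhat_def vec_eq_iff)

lemma yhat_linear: "linear (\<lambda>z. yhat k (fst z) (snd z) :: real^('m::{finite,linorder} + 'm))"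
  by (rule linearI) (simp_all add: yhat_def vec_eq_iff)

lemma yhat_bl: "bounded_linear (\<lambda>z. yhat k (fst z) (snd z) :: real^('m::{finite,linorder} + 'm))"
  using yhat_linear linear_conv_bounded_linear by blast

lemma yhat_norm:
  fixes u v :: "real^('m::{finite,linorder} + 'm)"
  shows "norm (yhat k u v) \<le> norm u + norm v"
proof -
  let ?T = "set (take k (coords :: ('m + 'm) list))"
  have "yhat k u v = (\<chi> d. if d \<in> ?T then 0 else u $ d) + (\<chi> d. if d \<in> ?T then v $ d else 0)"
    by (simp add: yhat_def vec_eq_iff)
  also have "norm \<dots> \<le> norm (\<chi> d. if d \<in> ?T then 0 else u $ d) + norm (\<chi> d. if d \<in> ?T then v $ d else 0)"
    by (rule norm_triangle_ineq)
  also have "\<dots> \<le> norm u + norm v"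
    by (intro add_mono norm_le_componentwise_cart) auto
  finally show ?thesis .
qed

lemma dir_deriv:
  fixes G :: "real^'n::finite \<Rightarrow> real"
  assumes "\<And>y. G differentiable (at y)"
  shows "((\<lambda>s. G (p + s *\<^sub>R axis c 1)) has_real_derivative partial G c (p + s *\<^sub>R axis c 1)) (at s)"
proof -
  let ?q = "p + s *\<^sub>R axis c 1"
  let ?G' = "frechet_derivative G (at ?q)"
  have dG: "(G has_derivative ?G') (at ?q)" using assms frechet_derivative_works by blast
  have dl: "((\<lambda>s. p + s *\<^sub>R axis c 1) has_derivative (\<lambda>t. t *\<^sub>R axis c 1)) (at s)"
    by (auto intro!: derivative_eq_intros)
  have "((\<lambda>s. G (p + s *\<^sub>R axis c 1)) has_derivative (\<lambda>t. ?G' (t *\<^sub>R axis c 1))) (at s)"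
    using has_derivative_compose[OF dl dG] by simp
  moreover have "(\<lambda>t. ?G' (t *\<^sub>R axis c 1)) = (*) (partial G c ?q)"
  proof
    fix t
    have "linear ?G'" using dG has_derivative_linear by blast
    then show "?G' (t *\<^sub>R axis c 1) = partial G c ?q * t"
      by (simp add: partial_def linear_scale)
  qed
  ultimately show ?thesis by (simp add: has_field_derivative_def)
qed

lemma smooth_diff: "smooth H \<Longrightarrow> iter_partial cs H differentiable (at y)"
  by (simp add: smooth_def)

lemma taylor2:
  fixes H :: "real^'n::finite \<Rightarrow> real"
  assumes sm: "smooth H"
  shows "\<exists>t. \<bar>t\<bar> \<le> \<bar>\<delta>\<bar> \<and> H (p + \<delta> *\<^sub>R axis c 1) - H p
     = \<delta> * partial H c p + \<delta>^2 / 2 * iter_partial [c, c] H (p + t *\<^sub>R axis c 1)"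
proof (cases "\<delta> = 0")
  case True then show ?thesis by (intro exI[of _ 0]) simp
next
  case False
  define diff where "diff m = (\<lambda>s. iter_partial (replicate m c) H (p + s *\<^sub>R axis c 1))" for m
  have D: "\<forall>m x. DERIV (diff m) x :> diff (Suc m) x"
    unfolding diff_def using dir_deriv[OF smooth_diff[OF sm]] by simp
  obtain t where t: "0 < \<bar>t\<bar>" "\<bar>t\<bar> < \<bar>\<delta>\<bar>"
    "diff 0 \<delta> = (\<Sum>m<2. diff m 0 / fact m * \<delta> ^ m) + diff 2 t / fact 2 * \<delta> ^ 2"
    using Maclaurin_all_lt[OF refl _ False D, of 2] by auto
  have "diff 0 \<delta> = H (p + \<delta> *\<^sub>R axis c 1)" by (simp add: diff_def)
  moreover have "(\<Sum>m<2. diff m 0 / fact m * \<delta> ^ m) = H p + partial H c p * \<delta>"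
    by (simp add: diff_def numeral_2_eq_2)
  moreover have "diff 2 t = iter_partial [c, c] H (p + t *\<^sub>R axis c 1)"
    by (simp add: diff_def numeral_2_eq_2)
  ultimately show ?thesis using t by (intro exI[of _ t]) (auto simp: algebra_simps)
qed

definition Dk :: "(real^('m::{finite,linorder} + 'm) \<Rightarrow> real) \<Rightarrow> nat
     \<Rightarrow> real^('m + 'm) \<Rightarrow> real^('m + 'm) \<Rightarrow> real" where
  "Dk H k a b = (let c = coords ! k in
       (if b $ c \<noteq> a $ c
        then (H (yhat (Suc k) a b) - H (yhat k a b)) / (b $ c - a $ c)
        else partial H c (yhat k a b)))"

lemma dgrad_Dk:
  fixes H :: "real^('m::{finite,linorder} + 'm) \<Rightarrow> real"
  shows "dgrad H a b = (\<Sum>k<length (coords::('m + 'm) list). Dk H k a b *\<^sub>R axis (coords ! k) 1)"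
  unfolding dgrad_def Dk_def by simp

lemma Dk_rep:
  fixes H :: "real^('m::{finite,linorder} + 'm) \<Rightarrow> real"
  assumes sm: "smooth H" and k: "k < length (coords :: ('m + 'm) list)"
  defines "c \<equiv> coords ! k"
  shows "\<exists>\<xi>. norm (\<xi> - yhat k a b) \<le> \<bar>b $ c - a $ c\<bar> \<and>
     Dk H k a b = partial H c (yhat k a b) + (b $ c - a $ c) / 2 * iter_partial [c, c] H \<xi>"
proof (cases "b $ c = a $ c")
  case True
  then show ?thesis by (intro exI[of _ "yhat k a b"]) (simp add: Dk_def c_def Let_def)
next
  case False
  define \<delta> where "\<delta> = b $ c - a $ c"
  have d0: "\<delta> \<noteq> 0" using False by (simp add: \<delta>_def)
  obtain t where t: "\<bar>t\<bar> \<le> \<bar>\<delta>\<bar>" and eq: "H (yhat k a b + \<delta> *\<^sub>R axis c 1) - H (yhat k a b)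
     = \<delta> * partial H c (yhat k a b) + \<delta>^2 / 2 * iter_partial [c, c] H (yhat k a b + t *\<^sub>R axis c 1)"
    using taylor2[OF sm] by blast
  have "Dk H k a b = (H (yhat k a b + \<delta> *\<^sub>R axis c 1) - H (yhat k a b)) / \<delta>"
    using False by (simp add: Dk_def Let_def c_def[symmetric] yhat_Suc[OF k] \<delta>_def)
  also have "\<dots> = partial H c (yhat k a b) + \<delta> / 2 * iter_partial [c, c] H (yhat k a b + t *\<^sub>R axis c 1)"
    using d0 by (simp add: eq field_simps power2_eq_square)
  finally show ?thesis using t
    by (intro exI[of _ "yhat k a b + t *\<^sub>R axis c 1"]) (simp add: \<delta>_def)
qed

lemma yhat_bl2: "bounded_linear (\<lambda>z. yhat k (snd z) (fst z) :: real^('m::{finite,linorder} + 'm))"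
proof -
  have "linear (\<lambda>z. yhat k (snd z) (fst z) :: real^('m::{finite,linorder} + 'm))"
    by (rule linearI) (simp_all add: yhat_def vec_eq_iff)
  then show ?thesis using linear_conv_bounded_linear by blast
qed

lemma Rm_deriv:
  fixes H :: "real^('m::{finite,linorder} + 'm) \<Rightarrow> real" and ybar :: "real^('m + 'm)"
  assumes sm: "smooth H" and k: "k < length (coords :: ('m + 'm) list)"
  defines "c \<equiv> coords ! k"
  defines "R \<equiv> \<lambda>z. Dk H k (fst z) (snd z) + Dk H k (snd z) (fst z)
      - (partial H c (yhat k (fst z) (snd z)) + partial H c (yhat k (snd z) (fst z)))"
  shows "(R has_derivative (\<lambda>_. 0)) (at (ybar, ybar))"
  unfolding has_derivative_at_alt
proof (intro conjI bounded_linear_zero allI impI)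
  fix e :: real assume e: "0 < e"
  let ?q = "iter_partial [c, c] H"
  have "continuous (at ybar) ?q"
    using smooth_diff[OF sm] differentiable_imp_continuous_within by blast
  then obtain d' where d': "d' > 0" "\<And>x. dist x ybar < d' \<Longrightarrow> dist (?q x) (?q ybar) < e / 2"
    unfolding continuous_at_eps_delta using e by (metis half_gt_zero)
  have R0: "R (ybar, ybar) = 0"
    by (simp add: R_def Dk_def Let_def c_def yhat_same)
  show "\<exists>d>0. \<forall>y. norm (y - (ybar, ybar)) < d \<longrightarrow> norm (R y - R (ybar, ybar) - 0) \<le> e * norm (y - (ybar, ybar))"
  proof (intro exI[of _ "d' / 4"] conjI allI impI)
    show "0 < d' / 4" using d' by simp
    fix y :: "(real^('m + 'm)) \<times> (real^('m + 'm))"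
    assume yd: "norm (y - (ybar, ybar)) < d' / 4"
    obtain a b where y: "y = (a, b)" by (cases y)
    define r where "r = norm (y - (ybar, ybar))"
    have ra: "norm (a - ybar) \<le> r" and rb: "norm (b - ybar) \<le> r"
      using norm_fst_le[of "a - ybar" "b - ybar"] norm_snd_le[of "b - ybar" "a - ybar"]
      by (simp_all add: r_def y)
    define \<delta> where "\<delta> = b $ c - a $ c"
    have "\<bar>\<delta>\<bar> = \<bar>(b - ybar) $ c - (a - ybar) $ c\<bar>" by (simp add: \<delta>_def)
    also have "\<dots> \<le> \<bar>(b - ybar) $ c\<bar> + \<bar>(a - ybar) $ c\<bar>" by (rule abs_triangle_ineq4)
    also have "\<dots> \<le> r + r" using ra rb component_le_norm_cart[of "b - ybar" c] component_le_norm_cart[of "a - ybar" c] by linarith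
    finally have dl: "\<bar>\<delta>\<bar> \<le> 2 * r" by simp
    have p1: "norm (yhat k a b - ybar) \<le> 2 * r"
      using yhat_norm[of k "a - ybar" "b - ybar"] yhat_diff[of k a b ybar ybar] ra rb by (simp add: yhat_same)
    have p2: "norm (yhat k b a - ybar) \<le> 2 * r"
      using yhat_norm[of k "b - ybar" "a - ybar"] yhat_diff[of k b a ybar ybar] ra rb by (simp add: yhat_same)
    obtain \<xi>1 where x1: "norm (\<xi>1 - yhat k a b) \<le> \<bar>b $ c - a $ c\<bar>"
      "Dk H k a b = partial H c (yhat k a b) + (b $ c - a $ c) / 2 * ?q \<xi>1"
      using Dk_rep[OF sm k, of a b] by (auto simp: c_def)
    obtain \<xi>2 where x2: "norm (\<xi>2 - yhat k b a) \<le> \<bar>a $ c - b $ c\<bar>"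
      "Dk H k b a = partial H c (yhat k b a) + (a $ c - b $ c) / 2 * ?q \<xi>2"
      using Dk_rep[OF sm k, of b a] by (auto simp: c_def)
    have Ry: "R y = \<delta> / 2 * (?q \<xi>1 - ?q \<xi>2)"
      by (simp add: R_def y x1(2) x2(2) \<delta>_def field_simps)
    have r4: "4 * r < d'" using yd by (simp add: r_def)
    have "norm (\<xi>1 - ybar) \<le> norm (\<xi>1 - yhat k a b) + norm (yhat k a b - ybar)"
      using norm_triangle_ineq[of "\<xi>1 - yhat k a b" "yhat k a b - ybar"] by simp
    then have "norm (\<xi>1 - ybar) < d'" using x1(1) p1 dl r4 by (simp add: \<delta>_def)
    then have q1: "\<bar>?q \<xi>1 - ?q ybar\<bar> < e / 2" using d'(2)[of \<xi>1] by (simp add: dist_norm)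
    have "norm (\<xi>2 - ybar) \<le> norm (\<xi>2 - yhat k b a) + norm (yhat k b a - ybar)"
      using norm_triangle_ineq[of "\<xi>2 - yhat k b a" "yhat k b a - ybar"] by simp
    then have "norm (\<xi>2 - ybar) < d'" using x2(1) p2 dl r4 by (simp add: \<delta>_def abs_minus_commute)
    then have q2: "\<bar>?q \<xi>2 - ?q ybar\<bar> < e / 2" using d'(2)[of \<xi>2] by (simp add: dist_norm)
    have qq: "\<bar>?q \<xi>1 - ?q \<xi>2\<bar> \<le> e" using q1 q2 by linarith
    have "\<bar>R y\<bar> = \<bar>\<delta>\<bar> / 2 * \<bar>?q \<xi>1 - ?q \<xi>2\<bar>" by (simp add: Ry abs_mult)
    also have "\<dots> \<le> r * e"
      by (rule mult_mono) (use dl qq in auto)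
    finally show "norm (R y - R (ybar, ybar) - 0) \<le> e * norm (y - (ybar, ybar))"
      by (simp add: R0 r_def mult.commute)
  qed
qed

lemma Phi_deriv:
  fixes H :: "real^('m::{finite,linorder} + 'm) \<Rightarrow> real" and ybar :: "real^('m + 'm)"
  assumes sm: "smooth H" and k: "k < length (coords :: ('m + 'm) list)"
  defines "c \<equiv> coords ! k"
  shows "((\<lambda>z. Dk H k (fst z) (snd z) + Dk H k (snd z) (fst z)) has_derivative
           (\<lambda>z. frechet_derivative (partial H c) (at ybar) (fst z + snd z))) (at (ybar, ybar))"
proof -
  let ?g = "partial H c"
  let ?g' = "frechet_derivative ?g (at ybar)"
  define R where "R \<equiv> \<lambda>z. Dk H k (fst z) (snd z) + Dk H k (snd z) (fst z)
      - (partial H c (yhat k (fst z) (snd z)) + partial H c (yhat k (snd z) (fst z)))"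
  have dR: "(R has_derivative (\<lambda>_. 0)) (at (ybar, ybar))"
    unfolding R_def c_def by (rule Rm_deriv[OF sm k])
  have "?g differentiable (at ybar)" using smooth_diff[OF sm, of "[c]"] by simp
  then have dg: "(?g has_derivative ?g') (at ybar)" using frechet_derivative_works by blast
  have dp1: "((\<lambda>z. yhat k (fst z) (snd z)) has_derivative (\<lambda>z. yhat k (fst z) (snd z))) (at (ybar, ybar))"
    using yhat_bl bounded_linear_imp_has_derivative by blast
  have dp2: "((\<lambda>z. yhat k (snd z) (fst z)) has_derivative (\<lambda>z. yhat k (snd z) (fst z))) (at (ybar, ybar))"
    using yhat_bl2 bounded_linear_imp_has_derivative by blast
  have dg1: "((\<lambda>z. ?g (yhat k (fst z) (snd z))) has_derivative (\<lambda>z. ?g' (yhat k (fst z) (snd z)))) (at (ybar, ybar))"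
    using has_derivative_compose[OF dp1, of ?g ?g'] dg by (simp add: yhat_same)
  have dg2: "((\<lambda>z. ?g (yhat k (snd z) (fst z))) has_derivative (\<lambda>z. ?g' (yhat k (snd z) (fst z)))) (at (ybar, ybar))"
    using has_derivative_compose[OF dp2, of ?g ?g'] dg by (simp add: yhat_same)
  have lin: "linear ?g'" using dg has_derivative_linear by blast
  have all: "((\<lambda>z. (?g (yhat k (fst z) (snd z)) + ?g (yhat k (snd z) (fst z))) + R z) has_derivative
      (\<lambda>z. (?g' (yhat k (fst z) (snd z)) + ?g' (yhat k (snd z) (fst z))) + 0)) (at (ybar, ybar))"
    by (intro has_derivative_add dg1 dg2 dR)
  have e1: "(\<lambda>z. (?g (yhat k (fst z) (snd z)) + ?g (yhat k (snd z) (fst z))) + R z)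
      = (\<lambda>z. Dk H k (fst z) (snd z) + Dk H k (snd z) (fst z))"
    by (simp add: R_def)
  have e2: "(\<lambda>z. (?g' (yhat k (fst z) (snd z)) + ?g' (yhat k (snd z) (fst z))) + 0)
      = (\<lambda>z. ?g' (fst z + snd z))"
    using lin by (simp add: linear_add[symmetric] yhat_swap_add)
  show ?thesis using all unfolding e1 e2 .
qed

lemma chi_sum: "(\<chi> c. f c) = (\<Sum>c\<in>UNIV. f c *\<^sub>R axis c (1::real))"
  by (simp add: vec_eq_iff axis_def if_distrib cong: if_cong)

lemma dgrad_s_Dk:
  fixes H :: "real^('m::{finite,linorder} + 'm) \<Rightarrow> real"
  shows "dgrad_s H a b = (1/2) *\<^sub>R (\<Sum>k<length (coords::('m + 'm) list).
      (Dk H k a b + Dk H k b a) *\<^sub>R axis (coords ! k) 1)"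
  by (simp add: dgrad_s_def dgrad_Dk sum.distrib scaleR_add_left)

lemma dgrad_s_deriv:
  fixes H :: "real^('m::{finite,linorder} + 'm) \<Rightarrow> real" and ybar :: "real^('m + 'm)"
  assumes sm: "smooth H"
  shows "((\<lambda>(a, b). dgrad_s H a b) has_derivative
     (\<lambda>z. (1/2) *\<^sub>R (\<chi> c. frechet_derivative (partial H c) (at ybar) (fst z + snd z)))) (at (ybar, ybar))"
proof -
  have h1: "((\<lambda>z. (1/2) *\<^sub>R (\<Sum>k<length (coords::('m + 'm) list).
      (Dk H k (fst z) (snd z) + Dk H k (snd z) (fst z)) *\<^sub>R axis (coords ! k) 1)) has_derivative
     (\<lambda>z. (1/2) *\<^sub>R (\<Sum>k<length (coords::('m + 'm) list).
      frechet_derivative (partial H (coords ! k)) (at ybar) (fst z + snd z) *\<^sub>R axis (coords ! k) 1)))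
     (at (ybar, ybar))"
    by (intro has_derivative_scaleR_right has_derivative_sum has_derivative_scaleR_left Phi_deriv[OF sm]) simp
  have e1: "(\<lambda>z. (1/2) *\<^sub>R (\<Sum>k<length (coords::('m + 'm) list).
      (Dk H k (fst z) (snd z) + Dk H k (snd z) (fst z)) *\<^sub>R axis (coords ! k) 1)) = (\<lambda>(a, b). dgrad_s H a b)"
    by (auto simp: dgrad_s_Dk)
  have e2: "(\<lambda>z. (1/2) *\<^sub>R (\<Sum>k<length (coords::('m + 'm) list).
      frechet_derivative (partial H (coords ! k)) (at ybar) (fst z + snd z) *\<^sub>R axis (coords ! k) 1))
     = (\<lambda>z. (1/2) *\<^sub>R (\<chi> c. frechet_derivative (partial H c) (at ybar) (fst z + snd z)))"
    by (simp add: sum_coords[where f = "\<lambda>c. frechet_derivative (partial H c) (at ybar) (_ + _) *\<^sub>R axis c 1"] chi_sum)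
  show ?thesis by (subst e1[symmetric], subst e2[symmetric], rule h1)
qed

lemma dgrad_s_diag:
  fixes H :: "real^('m::{finite,linorder} + 'm) \<Rightarrow> real"
  shows "dgrad_s H y y = grad H y"
proof -
  have "dgrad_s H y y = (\<Sum>k<length (coords::('m + 'm) list). partial H (coords ! k) y *\<^sub>R axis (coords ! k) 1)"
    by (simp add: dgrad_s_Dk Dk_def yhat_same scaleR_sum_right)
  also have "\<dots> = grad H y"
    by (simp add: sum_coords[where f = "\<lambda>c. partial H c y *\<^sub>R axis c 1"] grad_def chi_sum)
  finally show ?thesis .
qed

lemma hessian_mv:
  fixes H :: "real^'n::finite \<Rightarrow> real"
  assumes sm: "smooth H"
  shows "hessian H y *v w = (\<chi> c. frechet_derivative (partial H c) (at y) w)"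
proof -
  have dc: "\<And>c. (partial H c has_derivative frechet_derivative (partial H c) (at y)) (at y)"
    using smooth_diff[OF sm, of "[_]"] frechet_derivative_works by force
  have "((\<lambda>y. \<Sum>c\<in>UNIV. partial H c y *\<^sub>R axis c 1) has_derivative
      (\<lambda>w. \<Sum>c\<in>UNIV. frechet_derivative (partial H c) (at y) w *\<^sub>R axis c 1)) (at y)"
    by (intro has_derivative_sum has_derivative_scaleR_left dc)
  then have d: "(grad H has_derivative (\<lambda>w. \<chi> c. frechet_derivative (partial H c) (at y) w)) (at y)"
    by (simp add: grad_def[abs_def] chi_sum)
  then have "grad H differentiable (at y)" unfolding differentiable_def by blast
  then have d2: "(grad H has_derivative (\<lambda>h. jacobian (grad H) (at y) *v h)) (at y)"
    using jacobian_works by blast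
  have "(\<lambda>h. jacobian (grad H) (at y) *v h) = (\<lambda>w. \<chi> c. frechet_derivative (partial H c) (at y) w)"
    using frechet_derivative_at[OF d] frechet_derivative_at[OF d2] by simp
  then show ?thesis unfolding hessian_def by metis
qed


theorem proposition6p8:
  fixes H :: "real^('m::{finite,linorder} + 'm) \<Rightarrow> real"
    and ybar :: "real^('m + 'm)"
    and h :: real
  defines "F' \<equiv> Smat ** hessian H ybar"
  defines "F \<equiv> Smat *v grad H ybar"
  defines "\<theta> \<equiv> 2 *\<^sub>R (matrix_inv F' ** mtanh ((h / 2) *\<^sub>R F'))"
  assumes smooth: "smooth H"
    and inv: "invertible F'"
    and hpos: "0 < h"
    and cosh_inv: "invertible (mcosh ((h / 2) *\<^sub>R F'))"
  shows "(\<lambda>(a, b). dgrad_s H a b) differentiable (at (ybar, ybar))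
       \<and> (\<forall>\<nu>0 \<nu>1. (\<nu>1 - \<nu>0 = \<theta> *v (Smat *v (dgrad_s H ybar ybar
              + frechet_derivative (\<lambda>(a, b). dgrad_s H a b) (at (ybar, ybar)) (\<nu>0, \<nu>1))))
           \<longleftrightarrow> \<nu>1 = mexp (h *\<^sub>R F') *v \<nu>0 + ((mexp (h *\<^sub>R F') - mat 1) ** matrix_inv F') *v F)"
proof
  have d: "((\<lambda>(a, b). dgrad_s H a b) has_derivative
     (\<lambda>z. (1/2) *\<^sub>R (\<chi> c. frechet_derivative (partial H c) (at ybar) (fst z + snd z)))) (at (ybar, ybar))"
    by (rule dgrad_s_deriv[OF smooth])
  then show "(\<lambda>(a, b). dgrad_s H a b) differentiable (at (ybar, ybar))"
    unfolding differentiable_def by blast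
  show "\<forall>\<nu>0 \<nu>1. (\<nu>1 - \<nu>0 = \<theta> *v (Smat *v (dgrad_s H ybar ybar
              + frechet_derivative (\<lambda>(a, b). dgrad_s H a b) (at (ybar, ybar)) (\<nu>0, \<nu>1))))
           \<longleftrightarrow> \<nu>1 = mexp (h *\<^sub>R F') *v \<nu>0 + ((mexp (h *\<^sub>R F') - mat 1) ** matrix_inv F') *v F"
  proof (intro allI)
    fix \<nu>0 \<nu>1 :: "real^('m + 'm)"
    have fd: "frechet_derivative (\<lambda>(a, b). dgrad_s H a b) (at (ybar, ybar)) (\<nu>0, \<nu>1)
        = (1/2) *\<^sub>R (hessian H ybar *v (\<nu>0 + \<nu>1))"
      using frechet_derivative_at[OF d, symmetric] by (simp add: hessian_mv[OF smooth])
    show "(\<nu>1 - \<nu>0 = \<theta> *v (Smat *v (dgrad_s H ybar ybar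
              + frechet_derivative (\<lambda>(a, b). dgrad_s H a b) (at (ybar, ybar)) (\<nu>0, \<nu>1))))
           \<longleftrightarrow> \<nu>1 = mexp (h *\<^sub>R F') *v \<nu>0 + ((mexp (h *\<^sub>R F') - mat 1) ** matrix_inv F') *v F"
      unfolding fd dgrad_s_diag \<theta>_def F_def F'_def
      by (rule main_algebra[OF inv[unfolded F'_def] cosh_inv[unfolded F'_def]])
  qed
qed

end
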